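(* Let $G$ be a group, $\mathcal{O}$ a conjugacy class of $G$, and $H$ a subgroup of $G$ such that $\mathcal{O}$ contains two distinct conjugacy classes $\mathcal{O}_1,\mathcal{O}_2$ of $H$. Assume there exist $r\in\mathcal{O}_1$ and $s\in\mathcal{O}_2$ such that $(rs)^2$ does not belong to the centralizer of $r$ in $G$. Then $\mathcal{O}$ is of type D.
   Context: A conjugacy class $\mathcal{O}$ of a group (regarded as a rack with $x\triangleright y=xyx^{-1}$) is of type D iff there exist $r,s\in\mathcal{O}$ with $(rs)^2\neq(sr)^2$ such that $r$ and $s$ are not conjugate in the subgroup $\langle r,s\rangle$. (In rack terms: a rack is of type D if it contains a subrack that is a disjoint union $R\sqcup S$ of two subracks with $r\triangleright(s\triangleright(r\triangleright s))\neq s$ for some $r\in R$, $s\in S$.) *)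

theory Defs
  imports "HOL-Algebra.Algebra"
begin

text \<open>Conjugacy class of x under conjugation by elements of K (K = carrier G gives the
conjugacy class in G; K = H a subgroup and x in H gives the conjugacy class in H).\<close>
definition conj_class_in :: "('a, 'b) monoid_scheme \<Rightarrow> 'a set \<Rightarrow> 'a \<Rightarrow> 'a set" where
  "conj_class_in G K x = {g \<otimes>\<^bsub>G\<^esub> x \<otimes>\<^bsub>G\<^esub> inv\<^bsub>G\<^esub> g | g. g \<in> K}"

definition is_conj_class :: "('a, 'b) monoid_scheme \<Rightarrow> 'a set \<Rightarrow> 'a set \<Rightarrow> bool" where
  "is_conj_class G K C \<longleftrightarrow> (\<exists>x\<in>K. C = conj_class_in G K x)"

definition centralizer :: "('a, 'b) monoid_scheme \<Rightarrow> 'a \<Rightarrow> 'a set" where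
  "centralizer G x = {g \<in> carrier G. g \<otimes>\<^bsub>G\<^esub> x = x \<otimes>\<^bsub>G\<^esub> g}"

definition type_D :: "('a, 'b) monoid_scheme \<Rightarrow> 'a set \<Rightarrow> bool" where
  "type_D G Cl \<longleftrightarrow> (\<exists>r\<in>Cl. \<exists>s\<in>Cl.
      (r \<otimes>\<^bsub>G\<^esub> s) [^]\<^bsub>G\<^esub> (2::nat) \<noteq> (s \<otimes>\<^bsub>G\<^esub> r) [^]\<^bsub>G\<^esub> (2::nat) \<and>
      \<not> (\<exists>g \<in> generate G {r, s}. g \<otimes>\<^bsub>G\<^esub> r \<otimes>\<^bsub>G\<^esub> inv\<^bsub>G\<^esub> g = s))"

end

theory Submission
  imports Defs
begin

lemma conj_in_H:
  fixes G (structure)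
  assumes "group G" "subgroup H G" "x \<in> H" "y \<in> conj_class_in G H x"
  shows "y \<in> H"
proof -
  interpret group G by fact
  obtain h where h: "h \<in> H" "y = h \<otimes>\<^bsub>G\<^esub> x \<otimes>\<^bsub>G\<^esub> inv\<^bsub>G\<^esub> h"
    using assms(4) unfolding conj_class_in_def by blast
  thus ?thesis using assms(3) by (simp add: subgroup.m_closed[OF assms(2)] subgroup.m_inv_closed[OF assms(2)])
qed

lemma conj_class_same:
  fixes G (structure)
  assumes "group G" "subgroup H G" "x \<in> H" "y \<in> conj_class_in G H x"
  shows "conj_class_in G H y = conj_class_in G H x"
proof -
  interpret group G by fact
  have HG: "H \<subseteq> carrier G" using assms(2) subgroup.subset by blast
  obtain h where h: "h \<in> H" "y = h \<otimes> x \<otimes> inv h"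
    using assms(4) unfolding conj_class_in_def by blast
  have hc: "h \<in> carrier G" "x \<in> carrier G" using h HG assms(3) by auto
  show ?thesis
  proof
    show "conj_class_in G H y \<subseteq> conj_class_in G H x"
    proof
      fix z assume "z \<in> conj_class_in G H y"
      then obtain k where k: "k \<in> H" "z = k \<otimes> y \<otimes> inv k" unfolding conj_class_in_def by blast
      have kc: "k \<in> carrier G" using k HG by auto
      have "z = (k \<otimes> h) \<otimes> x \<otimes> inv (k \<otimes> h)"
        using k h hc kc by (simp add: inv_mult_group m_assoc)
      moreover have "k \<otimes> h \<in> H" using k(1) h(1) by (rule subgroup.m_closed[OF assms(2)])
      ultimately show "z \<in> conj_class_in G H x" unfolding conj_class_in_def by blast
    qed
  next
    show "conj_class_in G H x \<subseteq> conj_class_in G H y"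
    proof
      fix z assume "z \<in> conj_class_in G H x"
      then obtain k where k: "k \<in> H" "z = k \<otimes> x \<otimes> inv k" unfolding conj_class_in_def by blast
      have kc: "k \<in> carrier G" using k HG by auto
      have cancel: "inv h \<otimes> (h \<otimes> w) = w" if "w \<in> carrier G" for w
        using that hc by (simp add: m_assoc[symmetric])
      have "(k \<otimes> inv h) \<otimes> y \<otimes> inv (k \<otimes> inv h) = z"
        using k h hc kc by (simp add: inv_mult_group m_assoc cancel)
      then have "z = (k \<otimes> inv h) \<otimes> y \<otimes> inv (k \<otimes> inv h)" by simp
      moreover have "k \<otimes> inv h \<in> H" using k(1) h(1) by (intro subgroup.m_closed[OF assms(2)] subgroup.m_inv_closed[OF assms(2)])
      ultimately show "z \<in> conj_class_in G H y" unfolding conj_class_in_def by blast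
    qed
  qed
qed

theorem lemma2p5:
  fixes G (structure) and Cl Cl1 Cl2 H :: "'a set" and r s :: 'a
  assumes "group G"
    and "is_conj_class G (carrier G) Cl"
    and "subgroup H G"
    and "is_conj_class G H Cl1" and "is_conj_class G H Cl2"
    and "Cl1 \<subseteq> Cl" and "Cl2 \<subseteq> Cl" and "Cl1 \<noteq> Cl2"
    and "r \<in> Cl1" and "s \<in> Cl2"
    and "(r \<otimes> s) [^] (2::nat) \<notin> centralizer G r"
  shows "type_D G Cl"
proof -
  interpret group G by fact
  have HG: "H \<subseteq> carrier G" using assms(3) subgroup.subset by blast
  obtain x where x: "x \<in> H" "Cl1 = conj_class_in G H x" using assms(4) unfolding is_conj_class_def by blast
  obtain y where y: "y \<in> H" "Cl2 = conj_class_in G H y" using assms(5) unfolding is_conj_class_def by blast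
  have rH: "r \<in> H" using conj_in_H[OF assms(1,3) x(1)] x assms(9) by blast
  have sH: "s \<in> H" using conj_in_H[OF assms(1,3) y(1)] y assms(10) by blast
  have C1: "Cl1 = conj_class_in G H r" using conj_class_same[OF assms(1,3) x(1)] x assms(9) by simp
  have C2: "Cl2 = conj_class_in G H s" using conj_class_same[OF assms(1,3) y(1)] y assms(10) by simp
  have rc: "r \<in> carrier G" and sc: "s \<in> carrier G" using rH sH HG by auto
  have neq: "(r \<otimes> s) [^] (2::nat) \<noteq> (s \<otimes> r) [^] (2::nat)"
  proof
    assume eq: "(r \<otimes> s) [^] (2::nat) = (s \<otimes> r) [^] (2::nat)"
    have "r \<otimes> (r \<otimes> s) [^] (2::nat) = r \<otimes> (s \<otimes> r) [^] (2::nat)" using eq by simp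
    also have "\<dots> = (r \<otimes> s) [^] (2::nat) \<otimes> r"
      using rc sc by (simp add: numeral_2_eq_2 m_assoc)
    finally have "(r \<otimes> s) [^] (2::nat) \<in> centralizer G r"
      unfolding centralizer_def using rc sc by auto
    thus False using assms(11) by blast
  qed
  have nc: "\<not> (\<exists>g \<in> generate G {r, s}. g \<otimes> r \<otimes> inv g = s)"
  proof
    assume "\<exists>g \<in> generate G {r, s}. g \<otimes> r \<otimes> inv g = s"
    then obtain g where g: "g \<in> generate G {r, s}" "g \<otimes> r \<otimes> inv g = s" by blast
    have "{r, s} \<subseteq> H" using rH sH by simp
    hence "generate G {r, s} \<subseteq> H" by (rule generate_subgroup_incl[OF _ assms(3)])
    hence "s \<in> conj_class_in G H r" using g unfolding conj_class_in_def by blast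
    hence "conj_class_in G H s = conj_class_in G H r" using conj_class_same[OF assms(1,3) rH] by blast
    thus False using C1 C2 assms(8) by simp
  qed
  show ?thesis unfolding type_D_def using neq nc assms(6,7,9,10) by blast
qed

end
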